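(* Let $F$ be a distribution on $[0,\infty)$ with unbounded support and let $\gamma\ge0$ satisfy $\varphi(\gamma)<\infty$. Let $G(du)=e^{\gamma u}F(du)/\varphi(\gamma)$. Then $$\liminf_{x\to\infty}\frac{\overline{G*G}(x)}{\overline{G}(x)}\ge\frac{1}{\varphi(\gamma)}\liminf_{x\to\infty}\frac{\overline{F*F}(x)}{\overline{F}(x)}$$ and $$\limsup_{x\to\infty}\frac{\overline{G*G}(x)}{\overline{G}(x)}\le\frac{1}{\varphi(\gamma)}\limsup_{x\to\infty}\frac{\overline{F*F}(x)}{\overline{F}(x)}.$$
   Context: $\overline{F}(x)=F(x,\infty)$ is the tail of $F$; $\varphi(\gamma)=\int_0^\infty e^{\gamma x}F(dx)$. *)

theory Defs
  imports "HOL-Probability.Probability"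
begin

definition tail :: "real measure \<Rightarrow> real \<Rightarrow> real" where
  "tail M x = measure M {x<..}"

definition mgf :: "real measure \<Rightarrow> real \<Rightarrow> ennreal" where
  "mgf F \<gamma> = (\<integral>\<^sup>+ x. ennreal (exp (\<gamma> * x)) \<partial>F)"

definition tilt :: "real measure \<Rightarrow> real \<Rightarrow> real measure" where
  "tilt F \<gamma> = density F (\<lambda>u. ennreal (exp (\<gamma> * u) / enn2real (mgf F \<gamma>)))"

end

theory Submission
  imports Defs
begin

lemma layer_cake:
  assumes "sigma_finite_measure M" and f[measurable]: "f \<in> borel_measurable M"
  shows "(\<integral>\<^sup>+ w. ennreal (f w) \<partial>M) = (\<integral>\<^sup>+ t. emeasure M {w\<in>space M. 0 < t \<and> t < f w} \<partial>lborel)"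
proof -
  interpret pair_sigma_finite M lborel
    using assms(1) by (simp add: pair_sigma_finite.intro lborel.sigma_finite_measure_axioms)
  have "(\<integral>\<^sup>+ w. ennreal (f w) \<partial>M) = (\<integral>\<^sup>+ w. (\<integral>\<^sup>+ t. indicator {0<..<f w} t \<partial>lborel) \<partial>M)"
    apply (intro nn_integral_cong)
    subgoal for w by (cases "f w \<le> 0") (auto simp: emeasure_lborel_Ioo ennreal_neg)
    done
  also have "\<dots> = (\<integral>\<^sup>+ t. (\<integral>\<^sup>+ w. indicator {0<..<f w} t \<partial>M) \<partial>lborel)"
  proof (rule Fubini'[symmetric])
    show "(\<lambda>(w, t). indicator {0<..<f w} t :: ennreal) \<in> borel_measurable (M \<Otimes>\<^sub>M lborel)"
    proof -
      have "(\<lambda>(w, t). indicator {0<..<f w} t :: ennreal) = (\<lambda>p. if 0 < snd p \<and> snd p < f (fst p) then 1 else 0)"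
        by (auto simp: fun_eq_iff split: split_indicator)
      also have "\<dots> \<in> borel_measurable (M \<Otimes>\<^sub>M lborel)" by measurable
      finally show ?thesis .
    qed
  qed
  also have "\<dots> = (\<integral>\<^sup>+ t. emeasure M {w\<in>space M. 0 < t \<and> t < f w} \<partial>lborel)"
    apply (intro nn_integral_cong)
    apply (subst nn_integral_indicator[symmetric])
     apply measurable
    apply (intro nn_integral_cong)
    apply (auto split: split_indicator)
    done
  finally show ?thesis .
qed

lemma layer_meas:
  fixes f :: "'a \<Rightarrow> real"
  assumes "sigma_finite_measure M" and f[measurable]: "f \<in> borel_measurable M"
  shows "(\<lambda>t. emeasure M {w\<in>space M. 0 < t \<and> t < f w}) \<in> borel_measurable lborel"
proof -
  interpret sigma_finite_measure M by fact
  let ?Q = "{p \<in> space (borel \<Otimes>\<^sub>M M). 0 < fst p \<and> fst p < f (snd p)}"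
  have Q: "?Q \<in> sets (borel \<Otimes>\<^sub>M M)" by measurable
  have "\<And>t. Pair t -` ?Q = {w\<in>space M. 0 < t \<and> t < f w}"
    by (auto simp: space_pair_measure)
  with measurable_emeasure_Pair[OF Q] show ?thesis by simp
qed

lemma upper_set:
  fixes x t \<gamma> :: real
  assumes "\<gamma> \<ge> 0" "0 < t"
  shows "{u. x < u \<and> t < exp (\<gamma> * u)} = {} \<or> (\<exists>a\<ge>x. {u. x < u \<and> t < exp (\<gamma> * u)} = {a<..})"
proof (cases "\<gamma> = 0")
  case True
  then show ?thesis by (cases "t < 1") auto
next
  case False
  with assms have g: "\<gamma> > 0" by simp
  have iff: "t < exp (\<gamma> * u) \<longleftrightarrow> ln t / \<gamma> < u" for u
  proof -
    have "t < exp (\<gamma> * u) \<longleftrightarrow> ln t < \<gamma> * u"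
      using assms by (metis exp_less_cancel_iff exp_ln)
    also have "\<dots> \<longleftrightarrow> ln t / \<gamma> < u" using g by (simp add: divide_less_eq mult.commute)
    finally show ?thesis .
  qed
  have "{u. x < u \<and> t < exp (\<gamma> * u)} = {max x (ln t / \<gamma>)<..}"
    by (auto simp: iff)
  then show ?thesis by (intro disjI2 exI[of _ "max x (ln t / \<gamma>)"]) auto
qed

lemma layer_set:
  fixes x t \<gamma> :: real
  assumes "0 < t"
  shows "{w \<in> (UNIV::real set). 0 < t \<and> t < exp (\<gamma> * w) * indicator {x<..} w} = {u. x < u \<and> t < exp (\<gamma> * u)}"
  using assms by (auto split: split_indicator)

lemma J_compare:
  fixes H F :: "real measure" and c :: ennreal
  assumes sH: "sets H = sets borel" and sF: "sets F = sets borel"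
    and "sigma_finite_measure H" "sigma_finite_measure F" "\<gamma> \<ge> 0"
    and le: "\<forall>y\<ge>x. emeasure H {y<..} \<le> c * emeasure F {y<..}"
  shows "(\<integral>\<^sup>+u. ennreal (exp (\<gamma> * u) * indicator {x<..} u) \<partial>H)
          \<le> c * (\<integral>\<^sup>+u. ennreal (exp (\<gamma> * u) * indicator {x<..} u) \<partial>F)"
proof -
  have spH: "space H = UNIV" using sets_eq_imp_space_eq[OF sH] by simp
  have spF: "space F = UNIV" using sets_eq_imp_space_eq[OF sF] by simp
  have mH: "(\<lambda>u. exp (\<gamma> * u) * indicator {x<..} u) \<in> borel_measurable H"
    using sH by (simp add: measurable_cong_sets[OF sH refl])
  have mF: "(\<lambda>u. exp (\<gamma> * u) * indicator {x<..} u) \<in> borel_measurable F"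
    by (simp add: measurable_cong_sets[OF sF refl])
  have "(\<integral>\<^sup>+u. ennreal (exp (\<gamma> * u) * indicator {x<..} u) \<partial>H)
      = (\<integral>\<^sup>+ t. emeasure H {w\<in>space H. 0 < t \<and> t < exp (\<gamma> * w) * indicator {x<..} w} \<partial>lborel)"
    by (rule layer_cake[OF assms(3) mH])
  also have "\<dots> \<le> (\<integral>\<^sup>+ t. c * emeasure F {w\<in>space F. 0 < t \<and> t < exp (\<gamma> * w) * indicator {x<..} w} \<partial>lborel)"
  proof (rule nn_integral_mono)
    fix t :: real
    show "emeasure H {w\<in>space H. 0 < t \<and> t < exp (\<gamma> * w) * indicator {x<..} w}
        \<le> c * emeasure F {w\<in>space F. 0 < t \<and> t < exp (\<gamma> * w) * indicator {x<..} w}"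
    proof (cases "0 < t")
      case False then show ?thesis by simp
    next
      case True
      note eqs = layer_set[OF True, of \<gamma> x]
      from upper_set[OF \<open>\<gamma> \<ge> 0\<close> True, of x] show ?thesis
      proof
        assume E: "{u. x < u \<and> t < exp (\<gamma> * u)} = {}"
        show ?thesis unfolding spH spF eqs E by simp
      next
        assume "\<exists>a\<ge>x. {u. x < u \<and> t < exp (\<gamma> * u)} = {a<..}"
        then obtain a where "a \<ge> x" "{u. x < u \<and> t < exp (\<gamma> * u)} = {a<..}" by blast
        then show ?thesis using eqs spH spF le by simp
      qed
    qed
  qed
  also have "\<dots> = c * (\<integral>\<^sup>+ t. emeasure F {w\<in>space F. 0 < t \<and> t < exp (\<gamma> * w) * indicator {x<..} w} \<partial>lborel)"
    by (rule nn_integral_cmult) (rule layer_meas[OF assms(4) mF])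
  also have "\<dots> = c * (\<integral>\<^sup>+u. ennreal (exp (\<gamma> * u) * indicator {x<..} u) \<partial>F)"
    by (simp add: layer_cake[OF assms(4) mF])
  finally show ?thesis .
qed

lemma J_compare2:
  fixes H F :: "real measure" and c :: ennreal
  assumes sH: "sets H = sets borel" and sF: "sets F = sets borel"
    and "sigma_finite_measure H" "sigma_finite_measure F" "\<gamma> \<ge> 0"
    and le: "\<forall>y\<ge>x. c * emeasure F {y<..} \<le> emeasure H {y<..}"
  shows "c * (\<integral>\<^sup>+u. ennreal (exp (\<gamma> * u) * indicator {x<..} u) \<partial>F)
          \<le> (\<integral>\<^sup>+u. ennreal (exp (\<gamma> * u) * indicator {x<..} u) \<partial>H)"
proof -
  have spH: "space H = UNIV" using sets_eq_imp_space_eq[OF sH] by simp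
  have spF: "space F = UNIV" using sets_eq_imp_space_eq[OF sF] by simp
  have mH: "(\<lambda>u. exp (\<gamma> * u) * indicator {x<..} u) \<in> borel_measurable H"
    using sH by (simp add: measurable_cong_sets[OF sH refl])
  have mF: "(\<lambda>u. exp (\<gamma> * u) * indicator {x<..} u) \<in> borel_measurable F"
    by (simp add: measurable_cong_sets[OF sF refl])
  have "c * (\<integral>\<^sup>+u. ennreal (exp (\<gamma> * u) * indicator {x<..} u) \<partial>F)
      = c * (\<integral>\<^sup>+ t. emeasure F {w\<in>space F. 0 < t \<and> t < exp (\<gamma> * w) * indicator {x<..} w} \<partial>lborel)"
    by (simp add: layer_cake[OF assms(4) mF])
  also have "\<dots> = (\<integral>\<^sup>+ t. c * emeasure F {w\<in>space F. 0 < t \<and> t < exp (\<gamma> * w) * indicator {x<..} w} \<partial>lborel)"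
    by (rule nn_integral_cmult[symmetric]) (rule layer_meas[OF assms(4) mF])
  also have "\<dots> \<le> (\<integral>\<^sup>+ t. emeasure H {w\<in>space H. 0 < t \<and> t < exp (\<gamma> * w) * indicator {x<..} w} \<partial>lborel)"
  proof (rule nn_integral_mono)
    fix t :: real
    show "c * emeasure F {w\<in>space F. 0 < t \<and> t < exp (\<gamma> * w) * indicator {x<..} w}
        \<le> emeasure H {w\<in>space H. 0 < t \<and> t < exp (\<gamma> * w) * indicator {x<..} w}"
    proof (cases "0 < t")
      case False then show ?thesis by simp
    next
      case True
      note eqs = layer_set[OF True, of \<gamma> x]
      from upper_set[OF \<open>\<gamma> \<ge> 0\<close> True, of x] show ?thesis
      proof
        assume E: "{u. x < u \<and> t < exp (\<gamma> * u)} = {}"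
        show ?thesis unfolding spH spF eqs E by simp
      next
        assume "\<exists>a\<ge>x. {u. x < u \<and> t < exp (\<gamma> * u)} = {a<..}"
        then obtain a where "a \<ge> x" "{u. x < u \<and> t < exp (\<gamma> * u)} = {a<..}" by blast
        then show ?thesis using eqs spH spF le by simp
      qed
    qed
  qed
  also have "\<dots> = (\<integral>\<^sup>+u. ennreal (exp (\<gamma> * u) * indicator {x<..} u) \<partial>H)"
    by (rule layer_cake[OF assms(3) mH, symmetric])
  finally show ?thesis .
qed

lemma main_part:
  fixes F :: "real measure" and \<gamma> :: real
  assumes "prob_space F"
    and sF: "sets F = sets borel"
    and tpos: "\<forall>x. tail F x > 0"
    and "\<gamma> \<ge> 0"
    and "mgf F \<gamma> < \<infinity>"
  shows "\<exists>\<phi>>0. \<exists>jF jH. (\<forall>x. jF x > 0) \<and>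
     (\<forall>x. tail (tilt F \<gamma>) x = jF x / \<phi>) \<and> (\<forall>x. tail (tilt F \<gamma> \<star> tilt F \<gamma>) x = jH x / \<phi>^2) \<and>
     (\<forall>x c. (\<forall>y\<ge>x. tail (F \<star> F) y \<le> c * tail F y) \<longrightarrow> jH x \<le> c * jF x) \<and>
     (\<forall>x c. (\<forall>y\<ge>x. c * tail F y \<le> tail (F \<star> F) y) \<longrightarrow> c * jF x \<le> jH x) \<and>
     \<phi> = enn2real (mgf F \<gamma>)"
proof -
  interpret F: prob_space F by fact
  have spF: "space F = UNIV" using sets_eq_imp_space_eq[OF sF] by simp
  have toF: "h \<in> borel_measurable F" if "h \<in> borel_measurable borel" for h :: "real \<Rightarrow> ennreal"
    using that by (simp add: measurable_cong_sets[OF sF refl])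
  have mexp[measurable]: "(\<lambda>u. ennreal (exp (\<gamma> * u))) \<in> borel_measurable F"
    by (simp add: measurable_cong_sets[OF sF refl])
  have "mgf F \<gamma> \<noteq> 0"
  proof
    assume "mgf F \<gamma> = 0"
    then have "AE u in F. ennreal (exp (\<gamma> * u)) = 0"
      unfolding mgf_def using nn_integral_0_iff_AE[OF mexp] by simp
    then have "AE u in F. False" by simp
    then show False using F.AE_False by simp
  qed
  define \<phi> where "\<phi> = enn2real (mgf F \<gamma>)"
  have mgf_eq: "mgf F \<gamma> = ennreal \<phi>" unfolding \<phi>_def using assms(5) by (simp add: less_top[symmetric])
  have phipos: "\<phi> > 0" using \<open>mgf F \<gamma> \<noteq> 0\<close> mgf_eq unfolding \<phi>_def by (metis enn2real_nonneg ennreal_0 less_le)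
  define G where "G = tilt F \<gamma>"
  have Gdef: "G = density F (\<lambda>u. ennreal (exp (\<gamma> * u) / \<phi>))" by (simp add: G_def tilt_def \<phi>_def)
  have sG: "sets G = sets borel" using sF by (simp add: Gdef)
  have spG: "space G = UNIV" using sets_eq_imp_space_eq[OF sG] by simp
  define JF where "JF x = (\<integral>\<^sup>+u. ennreal (exp (\<gamma> * u) * indicator {x<..} u) \<partial>F)" for x
  define JH where "JH x = (\<integral>\<^sup>+u. ennreal (exp (\<gamma> * u) * indicator {x<..} u) \<partial>(F \<star> F))" for x
  have mdens[measurable]: "(\<lambda>u. ennreal (exp (\<gamma> * u) / \<phi>)) \<in> borel_measurable F"
    by (simp add: measurable_cong_sets[OF sF refl])
  have G_tail: "emeasure G {x<..} = ennreal (1/\<phi>) * JF x" for x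
  proof -
    have "emeasure G {x<..} = (\<integral>\<^sup>+u. ennreal (exp (\<gamma> * u) / \<phi>) * indicator {x<..} u \<partial>F)"
      unfolding Gdef by (rule emeasure_density) (auto simp: sF)
    also have "\<dots> = (\<integral>\<^sup>+u. ennreal (1/\<phi>) * ennreal (exp (\<gamma> * u) * indicator {x<..} u) \<partial>F)"
      using phipos by (intro nn_integral_cong) (auto split: split_indicator simp: ennreal_mult[symmetric])
    also have "\<dots> = ennreal (1/\<phi>) * JF x"
      unfolding JF_def by (rule nn_integral_cmult) (simp add: measurable_cong_sets[OF sF refl])
    finally show ?thesis .
  qed
  have Gprob: "prob_space G"
  proof (rule prob_spaceI)
    have "emeasure G (space G) = (\<integral>\<^sup>+u. ennreal (exp (\<gamma> * u) / \<phi>) * indicator UNIV u \<partial>F)"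
      unfolding spG unfolding Gdef by (rule emeasure_density) (auto simp: sF)
    also have "\<dots> = (\<integral>\<^sup>+u. ennreal (1/\<phi>) * ennreal (exp (\<gamma> * u)) \<partial>F)"
      using phipos by (intro nn_integral_cong) (auto simp: ennreal_mult[symmetric])
    also have "\<dots> = ennreal (1/\<phi>) * mgf F \<gamma>"
      unfolding mgf_def by (rule nn_integral_cmult) (simp add: measurable_cong_sets[OF sF refl])
    also have "\<dots> = 1" using phipos by (simp add: mgf_eq ennreal_mult[symmetric])
    finally show "emeasure G (space G) = 1" .
  qed
  have GG_tail: "emeasure (G \<star> G) {x<..} = ennreal (1/\<phi>^2) * JH x" for x
  proof -
    interpret G: prob_space G by (rule Gprob)
    let ?g = "\<lambda>u. ennreal (exp (\<gamma> * u) / \<phi>)"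
    let ?K = "\<lambda>a. \<integral>\<^sup>+b. ennreal (exp (\<gamma> * (a + b)) * indicator {x<..} (a + b)) \<partial>F"
    note sF[measurable_cong]
    have mK: "?K \<in> borel_measurable F"
      using F.borel_measurable_nn_integral_fst[of "\<lambda>p. ennreal (exp (\<gamma> * (fst p + snd p)) * indicator {x<..} (fst p + snd p))" F]
      by simp
    have mI: "(\<lambda>a. \<integral>\<^sup>+b. ?g b * indicator {x<..} (a + b) \<partial>F) \<in> borel_measurable F"
      using F.borel_measurable_nn_integral_fst[of "\<lambda>p. ?g (snd p) * indicator {x<..} (fst p + snd p)" F]
      by simp
    have "emeasure (G \<star> G) {x<..} = (\<integral>\<^sup>+a. \<integral>\<^sup>+b. indicator {x<..} (a + b) \<partial>G \<partial>G)"
      by (rule convolution_emeasure') (auto simp: sG G.finite_measure_axioms)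
    also have "\<dots> = (\<integral>\<^sup>+a. \<integral>\<^sup>+b. ?g b * indicator {x<..} (a + b) \<partial>F \<partial>G)"
      unfolding Gdef
      by (intro nn_integral_cong nn_integral_density toF) measurable
    also have "\<dots> = (\<integral>\<^sup>+a. ?g a * \<integral>\<^sup>+b. ?g b * indicator {x<..} (a + b) \<partial>F \<partial>F)"
      unfolding Gdef by (rule nn_integral_density) (fact mdens, fact mI)
    also have "\<dots> = (\<integral>\<^sup>+a. ennreal (1/\<phi>^2) * ?K a \<partial>F)"
    proof (rule nn_integral_cong)
      fix a
      have "?g a * (\<integral>\<^sup>+b. ?g b * indicator {x<..} (a + b) \<partial>F)
          = (\<integral>\<^sup>+b. ?g a * (?g b * indicator {x<..} (a + b)) \<partial>F)"
        by (rule nn_integral_cmult[symmetric]) (simp add: measurable_cong_sets[OF sF refl])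
      also have "\<dots> = (\<integral>\<^sup>+b. ennreal (1/\<phi>^2) * ennreal (exp (\<gamma> * (a + b)) * indicator {x<..} (a + b)) \<partial>F)"
        using phipos
        by (intro nn_integral_cong) (auto split: split_indicator simp: ennreal_mult[symmetric] exp_add distrib_left power2_eq_square)
      also have "\<dots> = ennreal (1/\<phi>^2) * ?K a"
        by (rule nn_integral_cmult) (simp add: measurable_cong_sets[OF sF refl])
      finally show "?g a * (\<integral>\<^sup>+b. ?g b * indicator {x<..} (a + b) \<partial>F) = ennreal (1/\<phi>^2) * ?K a" .
    qed
    also have "\<dots> = ennreal (1/\<phi>^2) * (\<integral>\<^sup>+a. ?K a \<partial>F)"
      by (rule nn_integral_cmult) (fact mK)
    also have "(\<integral>\<^sup>+a. ?K a \<partial>F) = JH x"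
      unfolding JH_def
      by (rule nn_integral_convolution[symmetric]) (auto simp: sF F.finite_measure_axioms)
    finally show ?thesis .
  qed
  interpret G: prob_space G by (rule Gprob)
  interpret FF: finite_measure "F \<star> F"
    by (rule convolution_finite) (auto simp: sF F.finite_measure_axioms)
  interpret GG: finite_measure "G \<star> G"
    by (rule convolution_finite) (auto simp: sG G.finite_measure_axioms)
  have sFF: "sets (F \<star> F) = sets borel" by simp
  have JF_eq: "JF x = ennreal \<phi> * emeasure G {x<..}" for x
    using phipos by (simp add: G_tail mult.assoc[symmetric] ennreal_mult[symmetric])
  have JH_eq: "JH x = ennreal (\<phi>^2) * emeasure (G \<star> G) {x<..}" for x
    using phipos by (simp add: GG_tail mult.assoc[symmetric] ennreal_mult[symmetric])
  have JF_fin: "JF x < \<infinity>" for x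
    unfolding JF_eq G.emeasure_eq_measure by (simp add: ennreal_mult_less_top)
  have JH_fin: "JH x < \<infinity>" for x
    unfolding JH_eq GG.emeasure_eq_measure by (simp add: ennreal_mult_less_top)
  define jF where "jF x = enn2real (JF x)" for x
  define jH where "jH x = enn2real (JH x)" for x
  have JFj: "JF x = ennreal (jF x)" for x using JF_fin[of x] by (simp add: jF_def ennreal_enn2real_if)
  have JHj: "JH x = ennreal (jH x)" for x using JH_fin[of x] by (simp add: jH_def ennreal_enn2real_if)
  have jF0: "jF x \<ge> 0" "jH x \<ge> 0" for x by (auto simp: jF_def jH_def)
  have jFpos: "jF x > 0" for x
  proof -
    have "JF x \<noteq> 0"
    proof
      assume "JF x = 0"
      then have "AE u in F. ennreal (exp (\<gamma> * u) * indicator {x<..} u) = 0"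
        unfolding JF_def by (subst nn_integral_0_iff_AE[symmetric]) (auto simp: measurable_cong_sets[OF sF refl])
      then have "AE u in F. u \<notin> {x<..}"
        by (auto elim!: eventually_mono split: split_indicator)
      then have "emeasure F {x<..} = 0"
        by (subst AE_iff_measurable[symmetric, where P="\<lambda>u. u \<notin> {x<..}"]) (auto simp: sF spF)
      then show False using tpos[rule_format, of x] by (simp add: tail_def measure_def)
    qed
    then show ?thesis using jF0[of x] JFj[of x] by (auto simp: less_le)
  qed
  have tG: "tail G x = jF x / \<phi>" for x
    unfolding tail_def measure_def G_tail JFj using phipos jF0 by (simp add: enn2real_mult ennreal_mult[symmetric])
  have tGG: "tail (G \<star> G) x = jH x / \<phi>^2" for x
    unfolding tail_def measure_def GG_tail JHj using phipos jF0 by (simp add: enn2real_mult ennreal_mult[symmetric])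
  have up: "jH x \<le> c * jF x" if H: "\<forall>y\<ge>x. tail (F \<star> F) y \<le> c * tail F y" for x c
  proof -
    have "0 \<le> tail (F \<star> F) x" by (simp add: tail_def)
    then have c0: "c \<ge> 0" using H tpos[rule_format, of x] by (meson le_less_trans not_le order_refl zero_le_mult_iff)
    have "\<forall>y\<ge>x. emeasure (F \<star> F) {y<..} \<le> ennreal c * emeasure F {y<..}"
    proof (intro allI impI)
      fix y assume "y \<ge> x"
      then have "tail (F \<star> F) y \<le> c * tail F y" using H by simp
      then show "emeasure (F \<star> F) {y<..} \<le> ennreal c * emeasure F {y<..}"
        using c0 by (simp add: tail_def FF.emeasure_eq_measure F.emeasure_eq_measure ennreal_mult[symmetric])
    qed
    from J_compare[OF sFF sF FF.sigma_finite_measure F.sigma_finite_measure \<open>\<gamma> \<ge> 0\<close> this]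
    have "JH x \<le> ennreal c * JF x" unfolding JH_def JF_def .
    then have "ennreal (jH x) \<le> ennreal (c * jF x)" using c0 jF0 by (simp add: JHj JFj ennreal_mult)
    then show ?thesis using c0 jF0 by (simp add: ennreal_le_iff)
  qed
  have lo: "c * jF x \<le> jH x" if H: "\<forall>y\<ge>x. c * tail F y \<le> tail (F \<star> F) y" for x c
  proof (cases "c \<ge> 0")
    case False
    then show ?thesis using jF0[of x] by (smt (verit) mult_nonpos_nonneg)
  next
    case c0: True
    have "\<forall>y\<ge>x. ennreal c * emeasure F {y<..} \<le> emeasure (F \<star> F) {y<..}"
    proof (intro allI impI)
      fix y assume "y \<ge> x"
      then have "c * tail F y \<le> tail (F \<star> F) y" using H by simp
      then show "ennreal c * emeasure F {y<..} \<le> emeasure (F \<star> F) {y<..}"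
        using c0 by (simp add: tail_def FF.emeasure_eq_measure F.emeasure_eq_measure ennreal_mult[symmetric])
    qed
    from J_compare2[OF sFF sF FF.sigma_finite_measure F.sigma_finite_measure \<open>\<gamma> \<ge> 0\<close> this]
    have "ennreal c * JF x \<le> JH x" unfolding JH_def JF_def .
    then have "ennreal (c * jF x) \<le> ennreal (jH x)" using c0 jF0 by (simp add: JHj JFj ennreal_mult)
    then show ?thesis using c0 jF0 by (simp add: ennreal_le_iff)
  qed
  show ?thesis
    apply (rule exI[of _ \<phi>])
    using phipos jFpos tG tGG up lo by (auto simp: G_def \<phi>_def)
qed


theorem lemma8:
  fixes F :: "real measure" and \<gamma> :: real
  assumes "prob_space F"
    and "sets F = sets borel"
    and "measure F {..<0} = 0"
    and "\<forall>x. tail F x > 0"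
    and "\<gamma> \<ge> 0"
    and "mgf F \<gamma> < \<infinity>"
  shows "(Liminf at_top (\<lambda>x. ereal (tail (tilt F \<gamma> \<star> tilt F \<gamma>) x / tail (tilt F \<gamma>) x))
           \<ge> ereal (1 / enn2real (mgf F \<gamma>)) * Liminf at_top (\<lambda>x. ereal (tail (F \<star> F) x / tail F x))) \<and>
         (Limsup at_top (\<lambda>x. ereal (tail (tilt F \<gamma> \<star> tilt F \<gamma>) x / tail (tilt F \<gamma>) x))
           \<le> ereal (1 / enn2real (mgf F \<gamma>)) * Limsup at_top (\<lambda>x. ereal (tail (F \<star> F) x / tail F x)))"
proof -
  obtain \<phi> jF jH where phipos: "\<phi> > 0" and jFpos: "\<forall>x. jF x > 0"
    and tG: "\<forall>x. tail (tilt F \<gamma>) x = jF x / \<phi>"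
    and tGG: "\<forall>x. tail (tilt F \<gamma> \<star> tilt F \<gamma>) x = jH x / \<phi>^2"
    and up: "\<forall>x c. (\<forall>y\<ge>x. tail (F \<star> F) y \<le> c * tail F y) \<longrightarrow> jH x \<le> c * jF x"
    and lo: "\<forall>x c. (\<forall>y\<ge>x. c * tail F y \<le> tail (F \<star> F) y) \<longrightarrow> c * jF x \<le> jH x"
    and phi: "\<phi> = enn2real (mgf F \<gamma>)"
    using main_part[OF assms(1,2,4,5,6)] by blast
  define rF where "rF x = tail (F \<star> F) x / tail F x" for x
  define rG where "rG x = tail (tilt F \<gamma> \<star> tilt F \<gamma>) x / tail (tilt F \<gamma>) x" for x
  have rG_eq: "rG x = jH x / (\<phi> * jF x)" for x
    using phipos jFpos[rule_format, of x] unfolding rG_def tG[rule_format] tGG[rule_format] by (simp add: field_simps power2_eq_square)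
  have tFpos: "tail F y > 0" for y using assms(4) by simp
  have nb: "(at_top :: real filter) \<noteq> bot" by simp
  have "Limsup at_top (\<lambda>x. ereal (rG x)) \<le> Limsup at_top (\<lambda>x. ereal (1/\<phi>) * ereal (rF x))"
  proof (subst Limsup_le_iff, intro allI impI)
    fix y assume y: "Limsup at_top (\<lambda>x. ereal (1/\<phi>) * ereal (rF x)) < y"
    then obtain z where z1: "Limsup at_top (\<lambda>x. ereal (1/\<phi>) * ereal (rF x)) < z" and z2: "z < y"
      using dense by blast
    from z1 z2 obtain w where zw: "z = ereal w" by (cases z) auto
    have "eventually (\<lambda>x. ereal (1/\<phi>) * ereal (rF x) < z) at_top" by (rule Limsup_lessD[OF z1])
    then obtain x0 where x0: "\<forall>x\<ge>x0. (1/\<phi>) * rF x < w"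
      unfolding zw eventually_at_top_linorder by auto
    have "\<forall>x\<ge>x0. ereal (rG x) < y"
    proof (intro allI impI)
      fix x assume "x \<ge> x0"
      have "\<forall>y'\<ge>x. tail (F \<star> F) y' \<le> (\<phi> * w) * tail F y'"
      proof (intro allI impI)
        fix y' assume "y' \<ge> x"
        then have "(1/\<phi>) * rF y' < w" using x0 \<open>x \<ge> x0\<close> by simp
        then show "tail (F \<star> F) y' \<le> (\<phi> * w) * tail F y'"
          using phipos tFpos[of y'] unfolding rF_def by (simp add: field_simps)
      qed
      then have "jH x \<le> (\<phi> * w) * jF x" using up by blast
      then have "rG x \<le> w" unfolding rG_eq using phipos jFpos[rule_format, of x]
        by (simp add: field_simps)
      then show "ereal (rG x) < y" using z2 zw by (metis ereal_less_eq(3) le_less_trans)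
    qed
    then show "eventually (\<lambda>x. ereal (rG x) < y) at_top"
      unfolding eventually_at_top_linorder by blast
  qed
  also have "\<dots> = ereal (1/\<phi>) * Limsup at_top (\<lambda>x. ereal (rF x))"
    using phipos by (intro Limsup_ereal_mult_left nb) simp
  finally have L1: "Limsup at_top (\<lambda>x. ereal (rG x)) \<le> ereal (1/\<phi>) * Limsup at_top (\<lambda>x. ereal (rF x))" .
  have "Liminf at_top (\<lambda>x. ereal (1/\<phi>) * ereal (rF x)) \<le> Liminf at_top (\<lambda>x. ereal (rG x))"
  proof (subst le_Liminf_iff, intro allI impI)
    fix y assume y: "y < Liminf at_top (\<lambda>x. ereal (1/\<phi>) * ereal (rF x))"
    then obtain z where z1: "z < Liminf at_top (\<lambda>x. ereal (1/\<phi>) * ereal (rF x))" and z2: "y < z"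
      using dense by blast
    from z1 z2 obtain w where zw: "z = ereal w" by (cases z) auto
    have "eventually (\<lambda>x. z < ereal (1/\<phi>) * ereal (rF x)) at_top" by (rule less_LiminfD[OF z1])
    then obtain x0 where x0: "\<forall>x\<ge>x0. w < (1/\<phi>) * rF x"
      unfolding zw eventually_at_top_linorder by auto
    have "\<forall>x\<ge>x0. y < ereal (rG x)"
    proof (intro allI impI)
      fix x assume "x \<ge> x0"
      have "\<forall>y'\<ge>x. (\<phi> * w) * tail F y' \<le> tail (F \<star> F) y'"
      proof (intro allI impI)
        fix y' assume "y' \<ge> x"
        then have "w < (1/\<phi>) * rF y'" using x0 \<open>x \<ge> x0\<close> by simp
        then show "(\<phi> * w) * tail F y' \<le> tail (F \<star> F) y'"
          using phipos tFpos[of y'] unfolding rF_def by (simp add: field_simps)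
      qed
      then have "(\<phi> * w) * jF x \<le> jH x" using lo by blast
      then have "w \<le> rG x" unfolding rG_eq using phipos jFpos[rule_format, of x]
        by (simp add: field_simps)
      then show "y < ereal (rG x)" using z2 zw by (metis ereal_less_eq(3) less_le_trans)
    qed
    then show "eventually (\<lambda>x. y < ereal (rG x)) at_top"
      unfolding eventually_at_top_linorder by blast
  qed
  moreover have "Liminf at_top (\<lambda>x. ereal (1/\<phi>) * ereal (rF x)) = ereal (1/\<phi>) * Liminf at_top (\<lambda>x. ereal (rF x))"
    using phipos by (intro Liminf_ereal_mult_left nb) simp
  ultimately have L2: "ereal (1/\<phi>) * Liminf at_top (\<lambda>x. ereal (rF x)) \<le> Liminf at_top (\<lambda>x. ereal (rG x))" by simp
  show ?thesis using L1 L2 unfolding rF_def rG_def phi by simp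
qed

end
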